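(* Let $l$ be a prime, $n\ge 2$, and $\mathcal{G}_n=\langle\alpha_1,\dots,\alpha_n\rangle\le S_{l^n}$ with $\alpha_r$ the product of the $l$-cycles $(j,\ j+l^{r-1},\dots,\ j+(l-1)l^{r-1})$, $j=1,\dots,l^{r-1}$. Let $\beta_i=((i-1)l+1,\ (i-1)l+2,\dots,\ il)$ for $1\le i\le l^{n-1}$. Then every $l$-cycle in $\mathcal{G}_n$ is of the form $\beta_i^j$ for some $i$ and $j$, and the conjugacy class of $\alpha_1=\beta_1$ in $\mathcal{G}_n$ is exactly $\{\beta_1,\dots,\beta_{l^{n-1}}\}$; in particular it has $l^{n-1}$ elements. *)

theory Defs
  imports "HOL-Algebra.Sym_Groups" "HOL-Algebra.Generated_Groups" "HOL-Combinatorics.Cycles" "HOL-Computational_Algebra.Primes"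
begin

definition alpha :: "nat \<Rightarrow> nat \<Rightarrow> (nat \<Rightarrow> nat)" where
  "alpha l r = foldr (\<lambda>j f. cycle_of_list (map (\<lambda>k. j + k * l^(r-1)) [0..<l]) \<circ> f)
                      [1..<l^(r-1)+1] id"

definition beta :: "nat \<Rightarrow> nat \<Rightarrow> (nat \<Rightarrow> nat)" where
  "beta l i = cycle_of_list [(i-1)*l+1..<i*l+1]"

definition Gn :: "nat \<Rightarrow> nat \<Rightarrow> (nat \<Rightarrow> nat) set" where
  "Gn l n = generate (sym_group (l^n)) (alpha l ` {1..n})"

definition is_cycle_of_length :: "nat \<Rightarrow> (nat \<Rightarrow> nat) \<Rightarrow> bool" where
  "is_cycle_of_length m \<sigma> \<longleftrightarrow> (\<exists>cs. distinct cs \<and> length cs = m \<and> \<sigma> = cycle_of_list cs)"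

definition conj_class_in :: "('a, 'b) monoid_scheme \<Rightarrow> 'a set \<Rightarrow> 'a \<Rightarrow> 'a set" where
  "conj_class_in G H x = {g \<otimes>\<^bsub>G\<^esub> x \<otimes>\<^bsub>G\<^esub> inv\<^bsub>G\<^esub> g | g. g \<in> H}"

end

theory Submission
  imports Defs
begin

lemma pow_split: "r \<ge> 1 \<Longrightarrow> (l::nat)^r = l * l^(r-1)"
  by (cases r) auto

lemma cycle_nth:
  assumes "distinct cs" "i < length cs"
  shows "cycle_of_list cs (cs!i) = cs!((Suc i) mod length cs)"
proof -
  have "map (cycle_of_list cs ^^ 1) cs = rotate 1 cs" using cyclic_rotation[OF assms(1)] .
  hence "map (cycle_of_list cs) cs = rotate 1 cs" by simp
  hence "cycle_of_list cs (cs!i) = rotate 1 cs ! i" using assms(2)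
    by (metis nth_map)
  thus ?thesis using assms(2) by (simp add: nth_rotate1)
qed

definition cstep :: "(nat \<Rightarrow> nat list) \<Rightarrow> nat \<Rightarrow> (nat \<Rightarrow> nat) \<Rightarrow> (nat \<Rightarrow> nat)" where
  "cstep cs j f = cycle_of_list (cs j) \<circ> f"

lemma foldr_cons_app: "foldr (cstep cs) (a#js) id x = cycle_of_list (cs a) (foldr (cstep cs) js id x)"
  by (simp add: cstep_def)

lemma cstep_app: "cstep cs a f x = cycle_of_list (cs a) (f x)"
  by (simp add: cstep_def)

lemma foldr_cons_fun: "foldr (cstep cs) (a#js) id = cycle_of_list (cs a) \<circ> foldr (cstep cs) js id"
  by (simp add: cstep_def)

lemma cycle_in_set: "x \<in> set cs \<Longrightarrow> cycle_of_list cs x \<in> set cs"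
  using cycle_permutes[of cs] by (simp add: permutes_in_image)

lemma foldr_out:
  assumes "\<forall>j\<in>set js. x \<notin> set (cs j)"
  shows "foldr (cstep cs) js id x = x"
  using assms
proof (induct js)
  case Nil then show ?case by simp
next
  case (Cons a js)
  have h: "foldr (cstep cs) js id x = x" by (rule Cons.hyps) (use Cons.prems in simp)
  have h2: "x \<notin> set (cs a)" using Cons.prems by simp
  have "foldr (cstep cs) (a#js) id x = cycle_of_list (cs a) (foldr (cstep cs) js id x)" by (rule foldr_cons_app)
  also have "\<dots> = cycle_of_list (cs a) x" by (simp only: h)
  also have "\<dots> = x" by (rule id_outside_supp) (rule h2)
  finally show ?case .
qed

lemma foldr_in:
  assumes "distinct js" "\<forall>j\<in>set js. \<forall>j'\<in>set js. j \<noteq> j' \<longrightarrow> set (cs j) \<inter> set (cs j') = {}"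
    "j \<in> set js" "x \<in> set (cs j)"
  shows "foldr (cstep cs) js id x = cycle_of_list (cs j) x"
  using assms
proof (induct js)
  case Nil then show ?case by simp
next
  case (Cons j0 js)
  show ?case
  proof (cases "j0 = j")
    case True
    hence "\<forall>j'\<in>set js. x \<notin> set (cs j')" using Cons.prems by auto
    hence "foldr (cstep cs) js id x = x" by (rule foldr_out)
    then show ?thesis using True by (simp only: foldr_cons_app)
  next
    case False
    have d1: "distinct js" using Cons.prems by simp
    have d2: "\<forall>j\<in>set js. \<forall>j'\<in>set js. j \<noteq> j' \<longrightarrow> set (cs j) \<inter> set (cs j') = {}"
      using Cons.prems(2) by simp
    have d3: "j \<in> set js" using Cons.prems(3) False by simp
    have IH: "foldr (cstep cs) js id x = cycle_of_list (cs j) x"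
      by (rule Cons.hyps[OF d1 d2 d3 Cons.prems(4)])
    have "cycle_of_list (cs j) x \<notin> set (cs j0)" using cycle_in_set[OF Cons.prems(4)] Cons.prems False
      by auto
    hence "cycle_of_list (cs j0) (cycle_of_list (cs j) x) = cycle_of_list (cs j) x" by (rule id_outside_supp)
    then show ?thesis using IH by (simp only: foldr_cons_app)
  qed
qed

lemma foldr_permutes:
  assumes "\<forall>j\<in>set js. set (cs j) \<subseteq> S"
  shows "foldr (cstep cs) js id permutes S"
  using assms
proof (induct js)
  case Nil then show ?case by (simp add: permutes_def)
next
  case (Cons a js)
  have "cycle_of_list (cs a) permutes S" using Cons.prems permutes_subset[OF cycle_permutes] by auto
  moreover have "foldr (cstep cs) js id permutes S" using Cons.prems by (intro Cons.hyps) simp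
  ultimately show ?case unfolding foldr_cons_fun by (rule permutes_compose[rotated])
qed

lemma alpha_foldr: "alpha l r = foldr (cstep (\<lambda>j. map (\<lambda>k. j + k * l^(r-1)) [0..<l])) [1..<l^(r-1)+1] id"
proof -
  have e: "cstep cs = (\<lambda>j f. cycle_of_list (cs j) \<circ> f)" for cs
    by (intro ext) (simp add: cstep_def)
  show ?thesis by (simp only: alpha_def e)
qed

lemma alpha_formula:
  assumes "l \<ge> 2" "r \<ge> 1"
  shows "alpha l r p = (if 1 \<le> p \<and> p \<le> l^r
     then (p-1) mod l^(r-1) + (((p-1) div l^(r-1) + 1) mod l) * l^(r-1) + 1 else p)"
proof -
  define L where "L = l^(r-1)"
  have L: "L > 0" "l^r = l * L" using assms pow_split[of r l] unfolding L_def
    by simp_all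
  define cs where "cs = (\<lambda>j. map (\<lambda>k. j + k * L) [0..<l])"
  have a: "alpha l r = foldr (cstep cs) [1..<L+1] id"
    by (simp only: alpha_foldr cs_def L_def)
  have setcs: "set (cs j) = {x. \<exists>k<l. x = j + k*L}" for j
    unfolding cs_def by auto
  have disj: "\<forall>j\<in>set [1..<L+1]. \<forall>j'\<in>set [1..<L+1]. j \<noteq> j' \<longrightarrow> set (cs j) \<inter> set (cs j') = {}"
  proof (intro ballI impI)
    fix j j' assume h: "j \<in> set [1..<L+1]" "j' \<in> set [1..<L+1]" "j \<noteq> j'"
    show "set (cs j) \<inter> set (cs j') = {}"
    proof (rule ccontr)
      assume "set (cs j) \<inter> set (cs j') \<noteq> {}"
      then obtain k k' where "j + k*L = j' + k'*L" using setcs by auto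
      hence e: "(j - 1) + k*L = (j' - 1) + k'*L" using h by auto
      have jl: "j - 1 < L" "j' - 1 < L" using h by auto
      have "(j - 1) = (j - 1 + k*L) mod L" using jl by simp
      also have "\<dots> = (j' - 1 + k'*L) mod L" by (simp only: e)
      also have "\<dots> = j' - 1" using jl by simp
      finally have "j - 1 = j' - 1" .
      thus False using h by auto
    qed
  qed
  show ?thesis
  proof (cases "1 \<le> p \<and> p \<le> l^r")
    case True
    define j where "j = (p-1) mod L + 1"
    define k where "k = (p-1) div L"
    have "(p-1) mod L < L" using L by simp
    hence jr: "j \<in> set [1..<L+1]" unfolding j_def by auto
    have kl: "k < l" unfolding k_def using True L
      by (metis One_nat_def Suc_le_eq Suc_pred div_less_iff_less_mult le_less_trans mult.commute not_le)
    have pe: "p = cs j ! k" unfolding cs_def j_def k_def using kl True k_def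
      by simp
    have dj: "distinct (cs j)" unfolding cs_def using L
      by (auto simp: distinct_map inj_on_def)
    have "alpha l r p = cycle_of_list (cs j) p"
      unfolding a apply (rule foldr_in[OF _ disj jr])
      using True pe kl unfolding cs_def by auto
    also have "\<dots> = cs j ! (Suc k mod l)" using cycle_nth[OF dj, of k] pe kl by (simp add: cs_def)
    also have "\<dots> = j + (Suc k mod l) * L" unfolding cs_def using assms by simp
    finally show ?thesis using True unfolding j_def k_def L_def by simp
  next
    case False
    have "\<forall>j\<in>set [1..<L+1]. p \<notin> set (cs j)"
    proof
      fix j assume "j \<in> set [1..<L+1]"
      hence "j \<ge> 1" "j \<le> L" by auto
      moreover have "k < l \<Longrightarrow> j + k*L \<le> l*L" for k
      proof -
        assume "k < l" hence "k*L + L \<le> l * L"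
          by (metis Suc_leI add.commute mult.commute mult_Suc_right mult_le_mono2)
        thus ?thesis using \<open>j \<le> L\<close> by linarith
      qed
      ultimately have "\<not> (\<exists>k<l. p = j + k*L)" using False L by auto
      thus "p \<notin> set (cs j)" unfolding setcs by simp
    qed
    hence "alpha l r p = p" unfolding a by (rule foldr_out)
    thus ?thesis by (simp only: if_not_P[OF False])
  qed
qed

lemma alpha_permutes:
  assumes "l \<ge> 2" "1 \<le> r" "r \<le> n"
  shows "alpha l r permutes {1..l^n}"
proof -
  define L where "L = l^(r-1)"
  have L: "L > 0" "l^r = l * L" using assms pow_split[of r l] unfolding L_def
    by simp_all
  have le: "l^r \<le> l^n" using assms by (simp add: power_increasing)
  define cs where "cs = (\<lambda>j. map (\<lambda>k. j + k * L) [0..<l])"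
  have a: "alpha l r = foldr (cstep cs) [1..<L+1] id"
    by (simp only: alpha_foldr cs_def L_def)
  have "\<forall>j\<in>set [1..<L+1]. set (cs j) \<subseteq> {1..l^n}"
  proof (intro ballI subsetI)
    fix j x assume j: "j \<in> set [1..<L+1]" and x: "x \<in> set (cs j)"
    from x obtain k where k: "k < l" "x = j + k*L" unfolding cs_def by auto
    have j2: "1 \<le> j" "j \<le> L" using j by auto
    have "k*L + L \<le> l * L" using k
        by (metis Suc_leI add.commute mult.commute mult_Suc_right mult_le_mono2)
    hence "x \<le> l * L" using k j2 by linarith
    hence "x \<le> l^n" using le L(2) by linarith
    moreover have "1 \<le> x" using k j2 by linarith
    ultimately show "x \<in> {1..l^n}" by simp
  qed
  thus ?thesis unfolding a by (rule foldr_permutes)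
qed

lemma aux_le: "(a::nat) < L \<Longrightarrow> c < l \<Longrightarrow> a + c*L + 1 \<le> l * L"
proof -
  assume "a < L" "c < l"
  hence "c*L + L \<le> l * L"
    by (metis Suc_leI add.commute mult.commute mult_Suc_right mult_le_mono2)
  thus ?thesis using \<open>a < L\<close> by linarith
qed

lemma alpha_pow:
  assumes "l \<ge> 2" "r \<ge> 1" "1 \<le> p" "p \<le> l^r"
  shows "(alpha l r ^^ k) p = (p-1) mod l^(r-1) + (((p-1) div l^(r-1) + k) mod l) * l^(r-1) + 1"
proof -
  define L where "L = l^(r-1)"
  have L: "L > 0" "l^r = l * L" using assms pow_split[of r l] unfolding L_def
    by simp_all
  have "(alpha l r ^^ k) p = (p-1) mod L + (((p-1) div L + k) mod l) * L + 1"
  proof (induct k)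
    case 0
    have "(p-1) div L < l" using assms L
      by (metis One_nat_def Suc_le_eq Suc_pred div_less_iff_less_mult le_less_trans mult.commute not_le)
    hence "((p-1) div L + 0) mod l = (p-1) div L" by simp
    moreover have "(p-1) mod L + (p-1) div L * L + 1 = p" using assms by simp
    ultimately show ?case by simp
  next
    case (Suc k)
    define a where "a = (p-1) mod L"
    define c where "c = ((p-1) div L + k) mod l"
    have ac: "a < L" "c < l" unfolding a_def c_def using L assms by auto
    have p': "(alpha l r ^^ k) p = a + c*L + 1" using Suc unfolding a_def c_def .
    have r1: "1 \<le> a + c*L + 1 \<and> a + c*L + 1 \<le> l^r" using aux_le[OF ac] L by simp
    have m: "(a + c*L) mod L = a" "(a + c*L) div L = c" using ac by auto
    have "(alpha l r ^^ Suc k) p = alpha l r (a + c*L + 1)" using p' by simp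
    also have "\<dots> = a + ((c + 1) mod l) * L + 1"
      using alpha_formula[OF assms(1,2), of "a + c*L + 1"] r1 m unfolding L_def[symmetric] by simp
    also have "(c + 1) mod l = ((p-1) div L + Suc k) mod l" unfolding c_def
      by (simp add: mod_Suc_eq)
    finally show ?case unfolding a_def .
  qed
  thus ?thesis unfolding L_def .
qed

lemma alpha_pow_out:
  assumes "l \<ge> 2" "r \<ge> 1" "\<not> (1 \<le> p \<and> p \<le> l^r)"
  shows "(alpha l r ^^ k) p = p"
  by (induct k) (use alpha_formula[OF assms(1,2), of p] assms(3) in auto)

lemma alpha_pow_l:
  assumes "l \<ge> 2" "r \<ge> 1"
  shows "alpha l r ^^ l = id"
proof
  fix p
  show "(alpha l r ^^ l) p = id p"
  proof (cases "1 \<le> p \<and> p \<le> l^r")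
    case True
    define L where "L = l^(r-1)"
    have L: "L > 0" "l^r = l * L" using assms pow_split[of r l] unfolding L_def
      by simp_all
    have "(p-1) div L < l" using True L
      by (metis One_nat_def Suc_le_eq Suc_pred div_less_iff_less_mult le_less_trans mult.commute not_le)
    hence "((p-1) div L + l) mod l = (p-1) div L" by simp
    hence "(alpha l r ^^ l) p = (p-1) mod L + (p-1) div L * L + 1"
      using alpha_pow[OF assms, of p l] True unfolding L_def by simp
    also have "\<dots> = p" using True by simp
    finally show ?thesis by simp
  next
    case False
    then show ?thesis using alpha_pow_out[OF assms False] by simp
  qed
qed

lemma inv_alpha:
  assumes "l \<ge> 2" "r \<ge> 1"
  shows "Hilbert_Choice.inv (alpha l r) = alpha l r ^^ (l-1)"
proof (rule inv_unique_comp)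
  have "Suc (l-1) = l" using assms by simp
  show "alpha l r \<circ> alpha l r ^^ (l - 1) = id"
    using alpha_pow_l[OF assms] funpow.simps(2)[of "l-1" "alpha l r"] \<open>Suc (l-1) = l\<close> by simp
  show "alpha l r ^^ (l - 1) \<circ> alpha l r = id"
    using alpha_pow_l[OF assms] funpow_Suc_right[of "l-1" "alpha l r"] \<open>Suc (l-1) = l\<close> by simp
qed

definition blockP :: "nat \<Rightarrow> (nat \<Rightarrow> nat) \<Rightarrow> bool" where
  "blockP l g \<longleftrightarrow> (\<forall>b. \<exists>b' t. \<forall>d<l. g (b*l+d+1) = b'*l + (d+t) mod l + 1)"

lemma blockP_id: "blockP l id"
  unfolding blockP_def
proof
  fix b show "\<exists>b' t. \<forall>d<l. id (b*l+d+1) = b'*l + (d+t) mod l + 1"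
    by (rule exI[of _ b], rule exI[of _ "0::nat"]) simp
qed

lemma blockP_comp:
  assumes "l > 0" "blockP l g" "blockP l h" shows "blockP l (g \<circ> h)"
  unfolding blockP_def
proof
  fix b
  obtain b' t where h: "\<forall>d<l. h (b*l+d+1) = b'*l + (d+t) mod l + 1"
    using assms(3) unfolding blockP_def by blast
  obtain b'' t' where g: "\<forall>d<l. g (b'*l+d+1) = b''*l + (d+t') mod l + 1"
    using assms(2) unfolding blockP_def by blast
  show "\<exists>b' t. \<forall>d<l. (g \<circ> h) (b * l + d + 1) = b' * l + (d + t) mod l + 1"
  proof (intro exI allI impI)
    fix d assume "d < l"
    have "(g \<circ> h) (b * l + d + 1) = b''*l + ((d+t) mod l + t') mod l + 1"
      using h g \<open>d < l\<close> assms(1) by simp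
    also have "((d+t) mod l + t') mod l = (d + (t + t')) mod l" by (simp add: mod_add_left_eq add.assoc)
    finally show "(g \<circ> h) (b * l + d + 1) = b''*l + (d + (t + t')) mod l + 1" .
  qed
qed

lemma blockP_pow: "l > 0 \<Longrightarrow> blockP l g \<Longrightarrow> blockP l (g ^^ k)"
  by (induct k) (simp_all add: blockP_id blockP_comp)

lemma blockP_alpha:
  assumes "l \<ge> 2" "r \<ge> 1"
  shows "blockP l (alpha l r)"
  unfolding blockP_def
proof
  fix b
  show "\<exists>b' t. \<forall>d<l. alpha l r (b*l+d+1) = b'*l + (d+t) mod l + 1"
  proof (cases "r = 1")
    case True
    show ?thesis
    proof (cases "b = 0")
      case True
      show ?thesis
      proof (rule exI[of _ "0::nat"], rule exI[of _ "1::nat"], intro allI impI)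
        fix d assume "d < l"
        thus "alpha l r (b*l+d+1) = 0*l + (d+1) mod l + 1"
          using \<open>r = 1\<close> True alpha_formula[OF assms, of "d+1"] by simp
      qed
    next
      case False
      hence "b * l \<ge> l" by simp
      show ?thesis
      proof (rule exI[of _ b], rule exI[of _ "0::nat"], intro allI impI)
        fix d assume "d < l"
        have e: "l^r = l" using \<open>r = 1\<close> by simp
        have "b*l + d + 1 > l" using \<open>b * l \<ge> l\<close> by linarith
        hence "\<not> (1 \<le> b*l+d+1 \<and> b*l+d+1 \<le> l^r)" unfolding e by linarith
        hence "alpha l r (b*l+d+1) = b*l+d+1" using alpha_formula[OF assms, of "b*l+d+1"] by simp
        thus "alpha l r (b*l+d+1) = b*l + (d+0) mod l + 1" using \<open>d < l\<close> by simp
      qed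
    qed
  next
    case False
    define M where "M = l^(r-2)"
    have LM: "l^(r-1) = l * M" "l^r = l*(l*M)" "M > 0" using False assms pow_split[of r l] pow_split[of "r-1" l] unfolding M_def
      by (simp_all add: numeral_2_eq_2 diff_diff_left)
    show ?thesis
    proof (cases "b < l * M")
      case True
      define b' where "b' = b mod M + ((b div M + 1) mod l) * M"
      show ?thesis
      proof (rule exI[of _ b'], rule exI[of _ "0::nat"], intro allI impI)
        fix d assume d: "d < l"
        have q1: "(b*l+d) mod (l*M) = d + l * (b mod M)"
          using d by (simp add: mod_mult2_eq)
        have q2: "(b*l+d) div (l*M) = b div M"
          using d by (simp add: div_mult2_eq)
        have inr: "1 \<le> b*l+d+1 \<and> b*l+d+1 \<le> l^r"
        proof -
          have "b*l + d + 1 \<le> b*l + l" using d by simp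
          also have "\<dots> = (b+1)*l" by simp
          also have "\<dots> \<le> (l*M)*l" using True by (intro mult_right_mono) auto
          finally show ?thesis using LM by (simp add: mult.commute)
        qed
        have "alpha l r (b*l+d+1) = d + l * (b mod M) + ((b div M + 1) mod l) * (l*M) + 1"
          using alpha_formula[OF assms, of "b*l+d+1"] inr q1 q2 LM by simp
        also have "\<dots> = b'*l + (d+0) mod l + 1" unfolding b'_def using d
          by (simp add: algebra_simps)
        finally show "alpha l r (b*l+d+1) = b'*l + (d+0) mod l + 1" .
      qed
    next
      case False
      show ?thesis
      proof (rule exI[of _ b], rule exI[of _ "0::nat"], intro allI impI)
        fix d assume d: "d < l"
        have "b*l+d+1 > l^r"
        proof -
          have "l^r = (l*M)*l" using LM by (simp add: mult.commute)
          also have "\<dots> \<le> b*l" using False by (intro mult_right_mono) auto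
          finally show ?thesis by simp
        qed
        thus "alpha l r (b*l+d+1) = b*l + (d+0) mod l + 1" using alpha_formula[OF assms] d by simp
      qed
    qed
  qed
qed

lemma sym_pow: "x [^]\<^bsub>sym_group N\<^esub> (k::nat) = x ^^ k"
proof -
  interpret group "sym_group N" by (rule sym_group_is_group)
  show ?thesis
  proof (induct k)
    case 0 then show ?case by (simp add: sym_group_one)
  next
    case (Suc k)
    have "x [^]\<^bsub>sym_group N\<^esub> Suc k = (x ^^ k) \<circ> x" using Suc
      by (simp add: nat_pow_def sym_group_def)
    also have "\<dots> = x ^^ Suc k" by (simp only: funpow_Suc_right)
    finally show ?case .
  qed
qed

lemma Gn_sub: "l \<ge> 2 \<Longrightarrow> alpha l ` {1..n} \<subseteq> carrier (sym_group (l^n))"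
  using alpha_permutes sym_group_carrier by auto

lemma Gn_carrier: assumes "l \<ge> 2" shows "Gn l n \<subseteq> carrier (sym_group (l^n))"
  unfolding Gn_def by (rule group.generate_incl[OF sym_group_is_group Gn_sub[OF assms]])

lemma Gn_blockP:
  assumes "l \<ge> 2" "g \<in> Gn l n" shows "blockP l g"
  using assms(2) unfolding Gn_def
proof (induct rule: generate.induct)
  case one
  show ?case unfolding sym_group_one by (rule blockP_id)
next
  case (incl h)
  then obtain r where "r \<in> {1..n}" "h = alpha l r" by auto
  then show ?case using blockP_alpha[OF assms(1)] by simp
next
  case (inv h)
  then obtain r where r: "r \<in> {1..n}" "h = alpha l r" by auto
  have "h \<in> carrier (sym_group (l^n))" using inv Gn_sub[OF assms(1)] by auto
  hence "inv\<^bsub>sym_group (l ^ n)\<^esub> h = Hilbert_Choice.inv h" by simp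
  also have "\<dots> = alpha l r ^^ (l-1)" using inv_alpha[OF assms(1)] r by simp
  finally show ?case using blockP_pow blockP_alpha[OF assms(1)] r assms(1) by simp
next
  case (eng h1 h2)
  have "blockP l (h1 \<circ> h2)" by (rule blockP_comp) (use eng assms in auto)
  then show ?case by (simp only: sym_group_mult)
qed

lemma Gn_mult: "g \<in> Gn l n \<Longrightarrow> h \<in> Gn l n \<Longrightarrow> g \<circ> h \<in> Gn l n"
  unfolding Gn_def using generate.eng[of g "sym_group (l^n)" _ h] by (simp add: sym_group_mult)

lemma Gn_id: "id \<in> Gn l n"
  unfolding Gn_def using generate.one[of "sym_group (l^n)"] unfolding sym_group_one .

lemma Gn_alpha_pow: "r \<in> {1..n} \<Longrightarrow> alpha l r ^^ k \<in> Gn l n"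
proof (induct k)
  case 0 show ?case unfolding funpow.simps(1) by (rule Gn_id)
next
  case (Suc k)
  have "alpha l r \<in> Gn l n" unfolding Gn_def using Suc.prems by (intro generate.incl) auto
  then show ?case unfolding funpow.simps(2) using Gn_mult Suc by blast
qed

lemma Gn_orbit:
  assumes "l \<ge> 2" shows "r \<le> n \<Longrightarrow> q < l^r \<Longrightarrow> \<exists>g\<in>Gn l n. g 1 = q + 1"
proof (induct r arbitrary: q)
  case 0
  then show ?case using Gn_id by (intro bexI[of _ id]) auto
next
  case (Suc r)
  define a where "a = q mod l^r"
  define k where "k = q div l^r"
  have pos: "l^r > 0" using assms by simp
  have a: "a < l^r" unfolding a_def using pos by simp
  have k: "k < l" unfolding k_def using Suc.prems(2)
    by (simp add: less_mult_imp_div_less mult.commute)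
  obtain g where g: "g \<in> Gn l n" "g 1 = a + 1" using Suc a by auto
  have le: "l^r \<le> l^Suc r" using assms by simp
  have inr: "1 \<le> a + 1" "a + 1 \<le> l ^ Suc r" using a le by linarith+
  have "(alpha l (Suc r) ^^ k) (a+1) = a mod l^r + ((a div l^r + k) mod l) * l^r + 1"
    using alpha_pow[OF assms _ inr, of k] by simp
  also have "\<dots> = q + 1" using a k unfolding a_def k_def by (simp add: mod_div_mult_eq)
  finally have "(alpha l (Suc r) ^^ k \<circ> g) 1 = q + 1" using g by (simp only: comp_apply)
  moreover have "alpha l (Suc r) ^^ k \<circ> g \<in> Gn l n"
  proof (rule Gn_mult)
    show "alpha l (Suc r) ^^ k \<in> Gn l n" by (rule Gn_alpha_pow) (use Suc.prems in simp)
  qed (rule g(1))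
  ultimately show ?case by blast
qed

definition Bl :: "nat \<Rightarrow> nat \<Rightarrow> nat list" where "Bl l b = [b*l+1..<b*l+l+1]"

lemma Bl_len: "length (Bl l b) = l" by (simp add: Bl_def)
lemma Bl_nth: "d < l \<Longrightarrow> Bl l b ! d = b*l+d+1" unfolding Bl_def by (subst nth_upt) auto
lemma Bl_dist: "distinct (Bl l b)" by (simp add: Bl_def)

lemma beta_Bl: "beta l (b+1) = cycle_of_list (Bl l b)"
proof -
  have "[(b+1-1)*l+1..<(b+1)*l+1] = [b*l+1..<b*l+l+1]" by (simp add: algebra_simps)
  thus ?thesis unfolding beta_def Bl_def by simp
qed

lemma in_Bl: "y \<in> set (Bl l b) \<longleftrightarrow> (\<exists>d<l. y = b*l+d+1)"
proof
  assume "y \<in> set (Bl l b)"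
  hence h: "b*l+1 \<le> y" "y < b*l+l+1" by (auto simp: Bl_def)
  show "\<exists>d<l. y = b*l+d+1" by (rule exI[of _ "y - b*l - 1"]) (use h in arith)
next
  assume "\<exists>d<l. y = b*l+d+1"
  thus "y \<in> set (Bl l b)" by (auto simp: Bl_def)
qed

lemma Bl_pt: "d < l \<Longrightarrow> b*l+d+1 \<in> set (Bl l b)"
  using in_Bl by blast

lemma pt_decomp: "0 < (l::nat) \<Longrightarrow> 1 \<le> y \<Longrightarrow> y = ((y-1) div l)*l + (y-1) mod l + 1"
  by simp

lemma Bl_disj:
  assumes "0 < l" "b \<noteq> b'" shows "set (Bl l b) \<inter> set (Bl l b') = {}"
proof (rule ccontr)
  assume "set (Bl l b) \<inter> set (Bl l b') \<noteq> {}"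
  then obtain y where "y \<in> set (Bl l b)" "y \<in> set (Bl l b')" by auto
  then obtain d e where de: "d < l" "e < l" "y = b*l+d+1" "y = b'*l+e+1" using in_Bl by metis
  have 1: "(b*l+d) div l = b" using de(1) assms(1) by simp
  have 2: "(b'*l+e) div l = b'" using de(2) assms(1) by simp
  have 3: "b*l+d = b'*l+e" using de by simp
  have "b = b'" using 1 2 3 by metis
  thus False using assms by simp
qed

lemma beta_pow_in:
  assumes "2 \<le> l" "d < l"
  shows "(beta l (b+1) ^^ j) (b*l+d+1) = b*l + (d+j) mod l + 1"
proof (induct j)
  case 0 then show ?case using assms by simp
next
  case (Suc j)
  have dl: "(d+j) mod l < l" using assms by simp
  have "(beta l (b+1) ^^ Suc j) (b*l+d+1) = beta l (b+1) (b*l + (d+j) mod l + 1)"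
    using Suc by simp
  also have "\<dots> = cycle_of_list (Bl l b) (Bl l b ! ((d+j) mod l))"
    unfolding beta_Bl using Bl_nth[OF dl] by simp
  also have "\<dots> = Bl l b ! (Suc ((d+j) mod l) mod l)"
    using cycle_nth[OF Bl_dist, of "(d+j) mod l" l b] dl by (simp add: Bl_len)
  also have "Suc ((d+j) mod l) mod l = (d + Suc j) mod l" by (simp add: mod_Suc_eq)
  also have "Bl l b ! ((d + Suc j) mod l) = b*l + (d + Suc j) mod l + 1"
    using assms by (intro Bl_nth) simp
  finally show ?case .
qed

lemma beta_pow_out:
  assumes "x \<notin> set (Bl l b)" shows "(beta l (b+1) ^^ j) x = x"
proof (induct j)
  case 0 then show ?case by simp
next
  case (Suc j)
  then show ?case using id_outside_supp[OF assms] unfolding beta_Bl by simp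
qed

lemma mod_shift_ne:
  assumes "e < (l::nat)" "t mod l \<noteq> 0" shows "(e + t) mod l \<noteq> e"
proof -
  define s where "s = t mod l"
  have s: "0 < s" "s < l" using assms unfolding s_def by auto
  have "(e + t) mod l = (e + s) mod l" unfolding s_def by (simp add: mod_add_right_eq)
  moreover have "(e + s) mod l \<noteq> e"
  proof (cases "e + s < l")
    case True thus ?thesis using s by simp
  next
    case False
    hence "e + s - l < l" "(e + s) = (e + s - l) + l" using s assms by auto
    hence "(e + s) mod l = e + s - l" by (metis mod_add_self2 mod_less)
    thus ?thesis using s False by arith
  qed
  ultimately show ?thesis by simp
qed

lemma card_Bl: "card (set (Bl l b)) = l"
  using distinct_card[OF Bl_dist] Bl_len by simp

lemma lcycle:
  assumes l2: "l \<ge> 2" and perm: "\<sigma> permutes {1..N}" and bp: "blockP l \<sigma>"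
    and cs: "distinct cs" "length cs = l" "\<sigma> = cycle_of_list cs" and N: "N = l*M"
  shows "\<exists>b<M. \<exists>t. \<sigma> = beta l (b+1) ^^ t"
proof -
  have l0: "0 < l" using l2 by simp
  have moved: "\<sigma> y \<noteq> y" if yin: "y \<in> set cs" for y
  proof -
    obtain i where i0: "i < length cs" "cs ! i = y" using yin by (auto simp: in_set_conv_nth)
    hence i: "i < l" "y = cs ! i" using cs(2) by auto
    have "\<sigma> y = cs ! (Suc i mod l)" using cycle_nth[OF cs(1), of i] i cs by simp
    moreover have "Suc i mod l \<noteq> i"
    proof (cases "Suc i = l")
      case True thus ?thesis using l2 by simp
    next
      case False thus ?thesis using i by simp
    qed
    moreover have "Suc i mod l < l" using l0 by simp
    ultimately show ?thesis using i cs(1,2) by (simp add: nth_eq_iff_index_eq)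
  qed
  have fixd: "\<sigma> y = y" if "y \<notin> set cs" for y
    using id_outside_supp[OF that] cs(3) by simp
  have fin: "finite (set cs)" by simp
  have ccs: "card (set cs) = l" using distinct_card[OF cs(1)] cs(2) by simp
  define x where "x = cs ! 0"
  have xin: "x \<in> set cs" unfolding x_def using cs(2) l0 by simp
  have "x \<in> {1..N}"
  proof (rule ccontr)
    assume "x \<notin> {1..N}"
    hence "\<sigma> x = x" using perm by (simp add: permutes_not_in)
    thus False using moved[OF xin] by simp
  qed
  hence x1: "1 \<le> x" "x \<le> N" by auto
  define b where "b = (x-1) div l"
  define d where "d = (x-1) mod l"
  have d: "d < l" unfolding d_def using l0 by simp
  have xe: "x = b*l+d+1" unfolding b_def d_def using x1 by simp
  have "x - 1 < M * l" using x1 N by (simp add: mult.commute)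
  hence bM: "b < M" unfolding b_def by (rule less_mult_imp_div_less)
  obtain b' t where bt: "\<forall>e<l. \<sigma> (b*l+e+1) = b'*l + (e+t) mod l + 1"
    using bp unfolding blockP_def by blast
  have inj: "inj \<sigma>" using perm permutes_inj by blast
  show ?thesis
  proof (cases "b' = b")
    case False
    have B1: "set (Bl l b) \<subseteq> set cs"
    proof
      fix y assume "y \<in> set (Bl l b)"
      then obtain e where e: "e < l" "y = b*l+e+1" using in_Bl by blast
      have "\<sigma> y = b'*l + (e+t) mod l + 1" using bt e by simp
      moreover have "(e+t) mod l < l" using l0 by simp
      ultimately have "\<sigma> y \<in> set (Bl l b')" using Bl_pt by metis
      hence "\<sigma> y \<noteq> y" using Bl_disj[OF l0 False] \<open>y \<in> set (Bl l b)\<close> by auto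
      thus "y \<in> set cs" using fixd by blast
    qed
    have img: "\<sigma> ` set (Bl l b) \<subseteq> set (Bl l b')"
    proof
      fix z assume "z \<in> \<sigma> ` set (Bl l b)"
      then obtain y where "y \<in> set (Bl l b)" "z = \<sigma> y" by auto
      then obtain e where e: "e < l" "y = b*l+e+1" using in_Bl by blast
      have "\<sigma> y = b'*l + (e+t) mod l + 1" using bt e by simp
      moreover have "(e+t) mod l < l" using l0 by simp
      ultimately show "z \<in> set (Bl l b')" using Bl_pt \<open>z = \<sigma> y\<close> by metis
    qed
    have "card (\<sigma> ` set (Bl l b)) = l" using card_image[OF inj_on_subset[OF inj subset_UNIV]] card_Bl by simp
    hence imeq: "\<sigma> ` set (Bl l b) = set (Bl l b')"
      using img card_Bl[of l b'] by (metis card_subset_eq List.finite_set)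
    have "\<sigma> ` set (Bl l b) \<subseteq> set cs"
    proof
      fix z assume "z \<in> \<sigma> ` set (Bl l b)"
      then obtain y where "y \<in> set (Bl l b)" "z = \<sigma> y" by auto
      hence "y \<in> set cs" using B1 by auto
      thus "z \<in> set cs" using cycle_in_set[of y cs] cs(3) \<open>z = \<sigma> y\<close> by simp
    qed
    hence B2: "set (Bl l b') \<subseteq> set cs" using imeq by simp
    have "card (set (Bl l b) \<union> set (Bl l b')) = l + l"
      using card_Un_disjoint[OF _ _ Bl_disj[OF l0 False[symmetric]]] card_Bl by simp
    moreover have "card (set (Bl l b) \<union> set (Bl l b')) \<le> l"
      using card_mono[OF fin] B1 B2 ccs by (metis Un_subset_iff)
    ultimately show ?thesis using l0 by simp
  next
    case True
    have tm: "t mod l \<noteq> 0"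
    proof
      assume "t mod l = 0"
      hence "(d + t) mod l = d" using d by (simp add: mod_add_right_eq[symmetric])
      hence "\<sigma> x = x" using bt d xe True by simp
      thus False using moved[OF xin] by simp
    qed
    have B1: "set (Bl l b) \<subseteq> set cs"
    proof
      fix y assume "y \<in> set (Bl l b)"
      then obtain e where e: "e < l" "y = b*l+e+1" using in_Bl by blast
      have "\<sigma> y = b*l + (e+t) mod l + 1" using bt e True by simp
      moreover have "(e+t) mod l \<noteq> e" using mod_shift_ne[OF e(1) tm] .
      ultimately have "\<sigma> y \<noteq> y" using e by simp
      thus "y \<in> set cs" using fixd by blast
    qed
    have seq: "set cs = set (Bl l b)"
      using card_subset_eq[OF fin B1] card_Bl ccs by simp
    have "\<sigma> = beta l (b+1) ^^ t"
    proof
      fix y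
      show "\<sigma> y = (beta l (b+1) ^^ t) y"
      proof (cases "y \<in> set (Bl l b)")
        case True
        then obtain e where e: "e < l" "y = b*l+e+1" using in_Bl by blast
        show ?thesis using bt e \<open>b' = b\<close> beta_pow_in[OF l2 e(1), where b=b and j=t] by simp
      next
        case False
        thus ?thesis using fixd[of y] seq beta_pow_out[OF False] by simp
      qed
    qed
    thus ?thesis using bM by blast
  qed
qed

lemma conj_beta:
  assumes l2: "l \<ge> 2" and perm: "g permutes {1..N}" and N: "N = l*M" and M0: "M > 0"
    and bt: "\<forall>d<l. g (0*l+d+1) = b'*l + (d+t) mod l + 1"
  shows "g \<circ> beta l 1 \<circ> Hilbert_Choice.inv g = beta l (b'+1) \<and> b' < M"
proof
  have l0: "0 < l" using l2 by simp
  have b1: "beta l 1 = cycle_of_list (Bl l 0)" using beta_Bl[of l 0] by simp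
  have bij: "bij g" using perm permutes_bij by blast
  have "g \<circ> beta l 1 \<circ> Hilbert_Choice.inv g = cycle_of_list (map g (Bl l 0))"
    unfolding b1 by (rule conjugation_of_cycle[OF Bl_dist bij])
  also have "map g (Bl l 0) = rotate t (Bl l b')"
  proof (rule nth_equalityI)
    show "length (map g (Bl l 0)) = length (rotate t (Bl l b'))" by (simp add: Bl_len)
    fix i assume "i < length (map g (Bl l 0))"
    hence i: "i < l" by (simp add: Bl_len)
    have "map g (Bl l 0) ! i = g (0*l+i+1)" using i Bl_nth[OF i, of 0] by (simp add: Bl_len)
    also have "\<dots> = b'*l + (i+t) mod l + 1" using bt i by blast
    also have "\<dots> = Bl l b' ! ((t + i) mod l)" using l0 by (subst Bl_nth) (simp_all add: add.commute)
    also have "\<dots> = rotate t (Bl l b') ! i" using i by (simp add: nth_rotate Bl_len)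
    finally show "map g (Bl l 0) ! i = rotate t (Bl l b') ! i" .
  qed
  also have "cycle_of_list (rotate t (Bl l b')) = cycle_of_list (Bl l b')"
    using cycle_of_list_rotate_independent[OF Bl_dist] by metis
  also have "\<dots> = beta l (b'+1)" using beta_Bl by simp
  finally show "g \<circ> beta l 1 \<circ> Hilbert_Choice.inv g = beta l (b'+1)" .
next
  have l0: "0 < l" using l2 by simp
  have "1 \<in> {1..N}" using N l0 M0 by (simp add: Suc_leI)
  hence "g 1 \<in> {1..N}" using perm by (simp only: permutes_in_image)
  moreover have "g 1 = b'*l + t mod l + 1" using bt l0 by force
  ultimately have "b'*l + t mod l + 1 \<le> l*M" using N by simp
  hence "b'*l < l*M" by linarith
  hence "b'*l < M*l" by (simp only: mult.commute)
  thus "b' < M" using mult_less_cancel2 by blast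
qed

lemma alpha_1: "alpha l 1 = beta l 1"
proof -
  have e: "map (\<lambda>k. 1 + k * l^(1-1)) [0..<l] = [0*l+1..<1*l+1]"
    by (simp add: map_Suc_upt[symmetric] del: upt_Suc)
  have u: "[1..<l^(1-1)+1] = [1]" by simp
  have "alpha l 1 = foldr (cstep (\<lambda>j. map (\<lambda>k. j + k * l^(1-1)) [0..<l])) [1] id"
    using alpha_foldr[of l 1] unfolding u .
  also have "\<dots> = cycle_of_list ((\<lambda>j. map (\<lambda>k. j + k * l^(1-1)) [0..<l]) 1) \<circ> foldr (cstep (\<lambda>j. map (\<lambda>k. j + k * l^(1-1)) [0..<l])) [] id"
    by (rule foldr_cons_fun)
  also have "\<dots> = cycle_of_list (map (\<lambda>k. 1 + k * l^(1-1)) [0..<l])"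
    by (simp only: foldr.simps(1) comp_id id_apply)
  also have "\<dots> = beta l 1" unfolding e beta_def by simp
  finally show ?thesis .
qed

theorem mainTheorem16:
  fixes l n :: nat
  assumes "prime l" and "n \<ge> 2"
  shows "(\<forall>\<sigma>\<in>Gn l n. is_cycle_of_length l \<sigma> \<longrightarrow>
            (\<exists>i\<in>{1..l^(n-1)}. \<exists>j::nat. \<sigma> = beta l i [^]\<^bsub>sym_group (l^n)\<^esub> j))
       \<and> alpha l 1 = beta l 1
       \<and> conj_class_in (sym_group (l^n)) (Gn l n) (alpha l 1) = beta l ` {1..l^(n-1)}
       \<and> card (conj_class_in (sym_group (l^n)) (Gn l n) (alpha l 1)) = l^(n-1)"
proof -
  have l2: "l \<ge> 2" using prime_ge_2_nat assms(1) by blast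
  have l0: "0 < l" using l2 by simp
  define M where "M = l^(n-1)"
  have N: "l^n = l*M" using pow_split[of n l] assms(2) unfolding M_def by simp
  have M0: "M > 0" using l2 unfolding M_def by simp
  have carr: "g permutes {1..l^n}" if "g \<in> Gn l n" for g
    using Gn_carrier[OF l2] sym_group_carrier that by blast
  have A: "\<forall>\<sigma>\<in>Gn l n. is_cycle_of_length l \<sigma> \<longrightarrow>
            (\<exists>i\<in>{1..M}. \<exists>j::nat. \<sigma> = beta l i [^]\<^bsub>sym_group (l^n)\<^esub> j)"
  proof (intro ballI impI)
    fix \<sigma> assume sg: "\<sigma> \<in> Gn l n" and cyc: "is_cycle_of_length l \<sigma>"
    obtain cs where cs: "distinct cs" "length cs = l" "\<sigma> = cycle_of_list cs"
      using cyc unfolding is_cycle_of_length_def by blast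
    obtain b t where bt: "b < M" "\<sigma> = beta l (b+1) ^^ t"
      using lcycle[OF l2 carr[OF sg] Gn_blockP[OF l2 sg] cs N] by blast
    have "b + 1 \<in> {1..M}" using bt by simp
    moreover have "\<sigma> = beta l (b+1) [^]\<^bsub>sym_group (l^n)\<^esub> t" using bt by (simp only: sym_pow)
    ultimately show "\<exists>i\<in>{1..M}. \<exists>j::nat. \<sigma> = beta l i [^]\<^bsub>sym_group (l^n)\<^esub> j" by blast
  qed
  have conj_eq: "g \<otimes>\<^bsub>sym_group (l^n)\<^esub> beta l 1 \<otimes>\<^bsub>sym_group (l^n)\<^esub> inv\<^bsub>sym_group (l^n)\<^esub> g
      = g \<circ> beta l 1 \<circ> Hilbert_Choice.inv g" if "g \<in> Gn l n" for g
  proof -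
    have "g \<in> carrier (sym_group (l^n))" using Gn_carrier[OF l2] that by blast
    thus ?thesis by (simp add: sym_group_mult)
  qed
  have C: "conj_class_in (sym_group (l^n)) (Gn l n) (alpha l 1) = beta l ` {1..M}"
  proof
    show "conj_class_in (sym_group (l^n)) (Gn l n) (alpha l 1) \<subseteq> beta l ` {1..M}"
    proof
      fix y assume "y \<in> conj_class_in (sym_group (l^n)) (Gn l n) (alpha l 1)"
      then obtain g where g: "g \<in> Gn l n"
        "y = g \<otimes>\<^bsub>sym_group (l^n)\<^esub> beta l 1 \<otimes>\<^bsub>sym_group (l^n)\<^esub> inv\<^bsub>sym_group (l^n)\<^esub> g"
        unfolding conj_class_in_def alpha_1 by blast
      obtain b' t where bt: "\<forall>d<l. g (0*l+d+1) = b'*l + (d+t) mod l + 1"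
        using Gn_blockP[OF l2 g(1)] unfolding blockP_def by blast
      have "g \<circ> beta l 1 \<circ> Hilbert_Choice.inv g = beta l (b'+1) \<and> b' < M"
        by (rule conj_beta[OF l2 carr[OF g(1)] N M0 bt])
      moreover have "y = g \<circ> beta l 1 \<circ> Hilbert_Choice.inv g" using g conj_eq by simp
      ultimately show "y \<in> beta l ` {1..M}" by force
    qed
  next
    show "beta l ` {1..M} \<subseteq> conj_class_in (sym_group (l^n)) (Gn l n) (alpha l 1)"
    proof
      fix y assume "y \<in> beta l ` {1..M}"
      then obtain i where i: "i \<in> {1..M}" "y = beta l i" by blast
      define b where "b = i - 1"
      have bM: "b < M" "i = b + 1" using i unfolding b_def by auto
      have "b*l < l^n" using bM N l0 by simp
      then obtain g where g: "g \<in> Gn l n" "g 1 = b*l + 1"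
        using Gn_orbit[OF l2 order_refl] by blast
      obtain b' t where bt: "\<forall>d<l. g (0*l+d+1) = b'*l + (d+t) mod l + 1"
        using Gn_blockP[OF l2 g(1)] unfolding blockP_def by blast
      have cb: "g \<circ> beta l 1 \<circ> Hilbert_Choice.inv g = beta l (b'+1) \<and> b' < M"
        by (rule conj_beta[OF l2 carr[OF g(1)] N M0 bt])
      have "g 1 = b'*l + t mod l + 1" using bt l0 by force
      hence e: "b'*l + t mod l = b*l + 0" using g by simp
      have "(b'*l + t mod l) div l = b'" using l0 by simp
      moreover have "(b*l + 0) div l = b" using l0 by simp
      ultimately have "b' = b" using e by metis
      hence "y = g \<otimes>\<^bsub>sym_group (l^n)\<^esub> beta l 1 \<otimes>\<^bsub>sym_group (l^n)\<^esub> inv\<^bsub>sym_group (l^n)\<^esub> g"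
        using cb conj_eq[OF g(1)] i bM by simp
      thus "y \<in> conj_class_in (sym_group (l^n)) (Gn l n) (alpha l 1)"
        unfolding conj_class_in_def alpha_1 using g(1) by blast
    qed
  qed
  have inj: "inj_on (beta l) {1..M}"
  proof
    fix i j assume ij: "i \<in> {1..M}" "j \<in> {1..M}" "beta l i = beta l j"
    define b where "b = i - 1"
    define c where "c = j - 1"
    have bc: "i = b + 1" "j = c + 1" using ij unfolding b_def c_def by auto
    show "i = j"
    proof (rule ccontr)
      assume "i \<noteq> j"
      hence bnc: "b \<noteq> c" using bc by simp
      have "(beta l (b+1) ^^ 1) (b*l+0+1) = b*l + (0+1) mod l + 1"
        by (rule beta_pow_in[OF l2]) (use l0 in simp)
      hence 1: "beta l (b+1) (b*l+1) = b*l + 2" using l2 by simp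
      have "b*l+0+1 \<in> set (Bl l b)" using l0 by (intro Bl_pt) simp
      hence "b*l+1 \<notin> set (Bl l c)" using Bl_disj[OF l0 bnc] by auto
      hence "(beta l (c+1) ^^ 1) (b*l+1) = b*l+1" by (rule beta_pow_out)
      hence 2: "beta l (c+1) (b*l+1) = b*l+1" by simp
      show False using 1 2 ij(3) bc by simp
    qed
  qed
  have D: "card (beta l ` {1..M}) = M" using card_image[OF inj] by simp
  show ?thesis using A alpha_1 C D unfolding M_def by simp
qed

end
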